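(* Let $f_1,\dots,f_m:\mathbb R^n\to\mathbb R$ be continuously differentiable, $\mu\ge0$, $\gamma_0>0$, $x_0,z_0\in\mathbb R^n$, and let $(\tau_k)_{k\ge0}$ be positive step sizes. Suppose sequences $(\gamma_k),(x_k),(z_k),(y_k)$ satisfy, for all $k\ge0$, the IMEX scheme $$\frac{\gamma_{k+1}-\gamma_k}{\tau_k}=\mu-\gamma_{k+1},\quad \frac{x_{k+1}-x_k}{\tau_k}=z_{k+1}-x_{k+1},\quad \gamma_k\frac{z_{k+1}-z_k}{\tau_k}=\mu(y_k-z_{k+1})-\mathrm{proj}_{C(y_k)}(w_{k+1}),$$ where $y_k=(x_k+\tau_kz_k)/(1+\tau_k)$ and $w_{k+1}=-\mu(z_{k+1}-y_k)+\gamma_k\frac{x_{k+1}-x_k}{\tau_k}-\gamma_k\frac{z_{k+1}-z_k}{\tau_k}$. Then for all $k\ge0$, $$\big\langle\mathrm{proj}_{C(y_k)}(w_{k+1}),x_{k+1}-x_k\big\rangle=\max_{1\le j\le m}\langle\nabla f_j(y_k),x_{k+1}-x_k\rangle.$$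
   Context: $C(y)=\mathrm{conv}\{\nabla f_1(y),\dots,\nabla f_m(y)\}$ and $\mathrm{proj}_C$ is the Euclidean projection onto the closed convex set $C$. *)

theory Defs
  imports "HOL-Analysis.Analysis"
begin

definition gradC :: "nat \<Rightarrow> (nat \<Rightarrow> 'a::euclidean_space \<Rightarrow> 'a) \<Rightarrow> 'a \<Rightarrow> 'a set" where
  "gradC m gf y = convex hull ((\<lambda>j. gf j y) ` {1..m})"

definition proj :: "'a::euclidean_space set \<Rightarrow> 'a \<Rightarrow> 'a" where
  "proj S v = closest_point S v"

end

theory Submission
  imports Defs
begin

lemma key:
  fixes S :: "'a::euclidean_space set" and w d :: 'a and c :: real
  assumes fin: "finite S" and ne: "S \<noteq> {}" and c: "c > 0"
    and wp: "w - closest_point (convex hull S) w = c *\<^sub>R d"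
  shows "closest_point (convex hull S) w \<bullet> d = Max ((\<lambda>s. s \<bullet> d) ` S)"
proof -
  let ?C = "convex hull S"
  let ?p = "closest_point ?C w"
  let ?M = "Max ((\<lambda>s. s \<bullet> d) ` S)"
  have cl: "closed ?C" using fin by (simp add: compact_convex_hull finite_imp_compact compact_imp_closed)
  have cne: "?C \<noteq> {}" using ne by simp
  have pC: "?p \<in> ?C" using closest_point_in_set[OF cl cne] .
  have sub: "S \<subseteq> {x. d \<bullet> x \<le> ?M}"
    using fin by (auto intro!: Max_ge simp: inner_commute)
  have cvx: "convex {x. d \<bullet> x \<le> ?M}" by (rule convex_halfspace_le)
  have "?C \<subseteq> {x. d \<bullet> x \<le> ?M}"
    by (rule hull_minimal[where S=convex, OF sub cvx])
  with pC have "d \<bullet> ?p \<le> ?M" by blast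
  then have le: "?p \<bullet> d \<le> ?M" by (simp only: inner_commute)
  have ge: "s \<bullet> d \<le> ?p \<bullet> d" if "s \<in> S" for s
  proof -
    have "s \<in> ?C" using that by (rule hull_inc)
    then have "(w - ?p) \<bullet> (s - ?p) \<le> 0" by (rule closest_point_dot[OF convex_convex_hull cl])
    then have "(c *\<^sub>R d) \<bullet> (s - ?p) \<le> 0" by (simp only: wp)
    then have "c * (d \<bullet> (s - ?p)) \<le> 0" by (simp only: inner_scaleR_left)
    then have "d \<bullet> (s - ?p) \<le> 0" using c by (simp add: mult_le_0_iff)
    then show ?thesis by (simp add: inner_diff_right inner_commute)
  qed
  have "?M \<in> (\<lambda>s. s \<bullet> d) ` S" using fin ne by (intro Max_in) auto
  then have "?M \<le> ?p \<bullet> d" using ge by auto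
  with le show ?thesis by linarith
qed

theorem mainTheorem9:
  fixes f :: "nat \<Rightarrow> 'a::euclidean_space \<Rightarrow> real"
    and gf :: "nat \<Rightarrow> 'a \<Rightarrow> 'a"
    and m :: nat and \<mu> :: real
    and \<tau> \<gamma> :: "nat \<Rightarrow> real"
    and x z :: "nat \<Rightarrow> 'a"
  assumes m: "m \<ge> 1"
    and grad: "\<And>j y. j \<in> {1..m} \<Longrightarrow> (f j has_derivative (\<lambda>h. gf j y \<bullet> h)) (at y)"
    and C1: "\<And>j. j \<in> {1..m} \<Longrightarrow> continuous_on UNIV (gf j)"
    and mu: "\<mu> \<ge> 0"
    and gamma0: "\<gamma> 0 > 0"
    and tau: "\<And>k. \<tau> k > 0"
    and gamma_step: "\<And>k. (\<gamma> (Suc k) - \<gamma> k) / \<tau> k = \<mu> - \<gamma> (Suc k)"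
    and x_step: "\<And>k. (1 / \<tau> k) *\<^sub>R (x (Suc k) - x k) = z (Suc k) - x (Suc k)"
    and z_step: "\<And>k. let y = (1 / (1 + \<tau> k)) *\<^sub>R (x k + \<tau> k *\<^sub>R z k);
                         w = - (\<mu> *\<^sub>R (z (Suc k) - y))
                             + (\<gamma> k / \<tau> k) *\<^sub>R (x (Suc k) - x k)
                             - (\<gamma> k / \<tau> k) *\<^sub>R (z (Suc k) - z k)
                     in (\<gamma> k / \<tau> k) *\<^sub>R (z (Suc k) - z k)
                        = \<mu> *\<^sub>R (y - z (Suc k)) - proj (gradC m gf y) w"
  shows "\<forall>k. let y = (1 / (1 + \<tau> k)) *\<^sub>R (x k + \<tau> k *\<^sub>R z k);
                  w = - (\<mu> *\<^sub>R (z (Suc k) - y))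
                      + (\<gamma> k / \<tau> k) *\<^sub>R (x (Suc k) - x k)
                      - (\<gamma> k / \<tau> k) *\<^sub>R (z (Suc k) - z k)
              in proj (gradC m gf y) w \<bullet> (x (Suc k) - x k)
                 = Max ((\<lambda>j. gf j y \<bullet> (x (Suc k) - x k)) ` {1..m})"
proof
  fix k
  have gpos: "\<gamma> n > 0" for n
  proof (induction n)
    case 0 then show ?case using gamma0 .
  next
    case (Suc n)
    have t: "\<tau> n > 0" using tau .
    have "\<gamma> (Suc n) - \<gamma> n = \<tau> n * (\<mu> - \<gamma> (Suc n))"
      using gamma_step[of n] t by (simp add: field_simps)
    then have "\<gamma> (Suc n) * (1 + \<tau> n) = \<gamma> n + \<tau> n * \<mu>" by (simp add: algebra_simps)
    moreover have "\<gamma> n + \<tau> n * \<mu> > 0" using Suc.IH t mu by (simp add: add_pos_nonneg)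
    ultimately show ?case using t by (smt (verit) mult_nonpos_nonneg)
  qed
  define y where "y = (1 / (1 + \<tau> k)) *\<^sub>R (x k + \<tau> k *\<^sub>R z k)"
  define w where "w = - (\<mu> *\<^sub>R (z (Suc k) - y))
                      + (\<gamma> k / \<tau> k) *\<^sub>R (x (Suc k) - x k)
                      - (\<gamma> k / \<tau> k) *\<^sub>R (z (Suc k) - z k)"
  define d where "d = x (Suc k) - x k"
  define S where "S = (\<lambda>j. gf j y) ` {1..m}"
  have zs: "(\<gamma> k / \<tau> k) *\<^sub>R (z (Suc k) - z k) = \<mu> *\<^sub>R (y - z (Suc k)) - proj (gradC m gf y) w"
    using z_step[of k] unfolding y_def w_def Let_def by simp
  have pe: "proj (gradC m gf y) w = closest_point (convex hull S) w"
    by (simp add: proj_def gradC_def S_def)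
  have wp: "w - closest_point (convex hull S) w = (\<gamma> k / \<tau> k) *\<^sub>R d"
  proof -
    have "w = - (\<mu> *\<^sub>R (z (Suc k) - y)) + (\<gamma> k / \<tau> k) *\<^sub>R (x (Suc k) - x k)
              - (\<mu> *\<^sub>R (y - z (Suc k)) - proj (gradC m gf y) w)"
      by (subst zs[symmetric]) (rule w_def)
    then show ?thesis unfolding d_def pe by (simp add: algebra_simps)
  qed
  have c: "\<gamma> k / \<tau> k > 0" using gpos[of k] tau[of k] by simp
  have "closest_point (convex hull S) w \<bullet> d = Max ((\<lambda>s. s \<bullet> d) ` S)"
    by (rule key[OF _ _ c wp]) (use m in \<open>auto simp: S_def\<close>)
  then have fin: "proj (gradC m gf y) w \<bullet> d = Max ((\<lambda>j. gf j y \<bullet> d) ` {1..m})"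
    by (simp add: pe S_def image_image)
  show "let y = (1 / (1 + \<tau> k)) *\<^sub>R (x k + \<tau> k *\<^sub>R z k);
                  w = - (\<mu> *\<^sub>R (z (Suc k) - y))
                      + (\<gamma> k / \<tau> k) *\<^sub>R (x (Suc k) - x k)
                      - (\<gamma> k / \<tau> k) *\<^sub>R (z (Suc k) - z k)
              in proj (gradC m gf y) w \<bullet> (x (Suc k) - x k)
                 = Max ((\<lambda>j. gf j y \<bullet> (x (Suc k) - x k)) ` {1..m})"
    using fin[unfolded w_def d_def y_def] unfolding Let_def .
qed

end
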